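(* Let $\tau\in\mathbb{Z}$ and let $m=2^\alpha a$, $l=2^\beta b$ with $a,b$ odd positive integers, $\alpha\ge1$, $\beta\ge0$. Then $$2^{2\alpha}\ \Big|\ (-1)^{m\tau+m+l}\binom{m}{l}\binom{m\tau+l-1}{m-1}-(-1)^{\frac{m\tau+m+l}{2}}\binom{m/2}{l/2}\binom{\frac{m\tau+l}{2}-1}{\frac{m}{2}-1},$$ where, when $\beta=0$, the second term is set to zero.
   Context: For integers $b\geq 0$ and $a\in\mathbb{Z}$ the binomial coefficient is defined by: $\binom{a}{b}=1$ if $b=0$; $\binom{a}{b}$ is the usual binomial coefficient if $b\geq 1$ and $a\geq 0$; and $\binom{a}{b}=(-1)^b\binom{-a+b-1}{b}$ if $b\geq1$ and $a<0$. *)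

theory Defs
  imports Main
begin

definition binom :: "int \<Rightarrow> nat \<Rightarrow> int" where
  "binom a b = (if b = 0 then 1
     else if a \<ge> 0 then int (nat a choose b)
     else (-1) ^ b * int (nat (- a + int b - 1) choose b))"

definition neg1pow :: "int \<Rightarrow> int" where
  "neg1pow k = (if even k then 1 else -1)"

end

theory Submission
  imports Defs Complex_Main
begin

definition ff :: "int \<Rightarrow> nat \<Rightarrow> int" where
  "ff x k = (\<Prod>i<k. x - int i)"

definition Pd :: "int \<Rightarrow> nat \<Rightarrow> int" where
  "Pd x k = (\<Prod>j<k. 2*x - 2*int j - 1)"

definition Od :: "nat \<Rightarrow> int" where
  "Od k = Pd (int k) k"

lemma ff_0 [simp]: "ff x 0 = 1" by (simp add: ff_def)
lemma ff_Suc: "ff x (Suc k) = ff x k * (x - int k)"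
  by (simp add: ff_def)
lemma ff_Suc': "ff x (Suc k) = x * ff (x - 1) k"
  unfolding ff_def by (subst prod.lessThan_Suc_shift) (simp add: algebra_simps)
lemma Pd_0 [simp]: "Pd x 0 = 1" by (simp add: Pd_def)
lemma Pd_Suc: "Pd x (Suc k) = Pd x k * (2*x - 2*int k - 1)"
  by (simp add: Pd_def)
lemma Pd_Suc': "Pd x (Suc k) = (2*x - 1) * Pd (x - 1) k"
  unfolding Pd_def by (subst prod.lessThan_Suc_shift) (simp add: algebra_simps)

lemma ff_nat: "ff (int k) k = fact k"
  by (induction k) (simp_all add: ff_Suc' ff_Suc fact_Suc algebra_simps)

lemma binom_rat: "(of_int (binom x k) :: rat) = of_int x gchoose k"
proof (cases "k = 0")
  case True then show ?thesis by (simp add: binom_def)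
next
  case False
  show ?thesis
  proof (cases "x \<ge> 0")
    case True
    have "(of_int (binom x k) :: rat) = of_nat (nat x choose k)"
      using False True by (simp add: binom_def)
    also have "\<dots> = of_nat (nat x) gchoose k" by (rule binomial_gbinomial)
    finally show ?thesis using True by simp
  next
    case neg: False
    have "(of_int (binom x k) :: rat) = (-1)^k * of_nat (nat (- x + int k - 1) choose k)"
      using False neg by (simp add: binom_def)
    also have "\<dots> = (-1)^k * (of_nat (nat (- x + int k - 1)) gchoose k)" by (simp add: binomial_gbinomial)
    also have "of_nat (nat (- x + int k - 1)) = (of_nat k - of_int x - 1 :: rat)"
      using neg by simp
    finally show ?thesis by (simp add: gbinomial_negated_upper[of "of_int x :: rat" k])
  qed
qed

lemma binom_fact: "binom x k * fact k = ff x k"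
proof -
  have "(of_int (binom x k * fact k) :: rat) = (of_int x gchoose k) * fact k"
    by (simp add: binom_rat)
  also have "\<dots> = (\<Prod>i = 0..<k. of_int x - of_nat i)" by (rule gbinomial_mult_fact')
  also have "\<dots> = of_int (ff x k)" by (simp add: ff_def atLeast0LessThan)
  finally show ?thesis by (simp only: of_int_eq_iff)
qed


lemma ff_double: "ff (2*x) (2*k) = 2^k * ff x k * Pd x k"
proof (induction k)
  case 0 then show ?case by simp
next
  case (Suc k)
  have "ff (2*x) (2*Suc k) = ff (2*x) (2*k) * (2*x - 2*int k) * (2*x - 2*int k - 1)"
    by (simp add: ff_Suc algebra_simps)
  also have "\<dots> = 2^Suc k * ff x (Suc k) * Pd x (Suc k)"
    using Suc by (simp add: ff_Suc Pd_Suc algebra_simps)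
  finally show ?case .
qed

lemma ff_double_odd: "ff (2*x - 1) (2*k + 1) = 2^k * ff (x - 1) k * Pd x (k + 1)"
proof (induction k)
  case 0 then show ?case by (simp add: ff_Suc Pd_Suc)
next
  case (Suc k)
  have "ff (2*x - 1) (2*Suc k + 1) = ff (2*x - 1) (2*k + 1) * (2*x - 2*int k - 2) * (2*x - 2*int k - 3)"
    by (simp add: ff_Suc algebra_simps)
  also have "\<dots> = 2^k * ff (x - 1) k * Pd x (k + 1) * (2*x - 2*int k - 2) * (2*x - 2*int k - 3)"
    by (simp only: Suc.IH)
  also have "\<dots> = 2^Suc k * (ff (x - 1) k * (x - 1 - int k)) * (Pd x (k + 1) * (2*x - 2*int (k+1) - 1))"
    by (simp add: algebra_simps)
  also have "\<dots> = 2^Suc k * ff (x - 1) (Suc k) * Pd x (Suc (k + 1))"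
    by (simp only: ff_Suc Pd_Suc)
  finally show ?case by simp
qed

lemma fact_double: "(fact (2*k) :: int) = 2^k * fact k * Od k"
proof -
  have "(fact (2*k) :: int) = ff (int (2*k)) (2*k)" by (simp only: ff_nat)
  also have "\<dots> = ff (2 * int k) (2*k)" by simp
  also have "\<dots> = 2^k * fact k * Od k" by (simp only: ff_double ff_nat Od_def)
  finally show ?thesis .
qed

lemma fact_double_odd: "(fact (2*k+1) :: int) = 2^k * fact k * Od (k+1)"
proof -
  have "(fact (2*k+1) :: int) = ff (int (2*k+1)) (2*k+1)" by (simp only: ff_nat)
  also have "\<dots> = ff (2 * int (k+1) - 1) (2*k+1)" by simp
  also have "\<dots> = 2^k * ff (int (k+1) - 1) k * Od (k+1)" by (simp only: ff_double_odd Od_def)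
  also have "\<dots> = 2^k * fact k * Od (k+1)" by (simp add: ff_nat)
  finally show ?thesis .
qed

lemma D1: "binom (2*x) (2*k) * Od k = binom x k * Pd x k"
proof -
  have e: "binom (2*x) (2*k) * fact (2*k) = 2^k * (binom x k * fact k) * Pd x k"
    by (simp add: binom_fact ff_double)
  have "(2^k * fact k) * (binom (2*x) (2*k) * Od k) = binom (2*x) (2*k) * fact (2*k)"
    unfolding fact_double by (simp add: mult_ac)
  also have "\<dots> = (2^k * fact k) * (binom x k * Pd x k)"
    using e by (simp add: mult_ac)
  finally show ?thesis by simp
qed

lemma D2: "binom (2*x - 1) (2*k+1) * Od (k+1) = binom (x - 1) k * Pd x (k+1)"
proof -
  have e: "binom (2*x - 1) (2*k+1) * fact (2*k+1) = 2^k * (binom (x - 1) k * fact k) * Pd x (k+1)"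
    by (simp only: binom_fact ff_double_odd)
  have "(2^k * fact k) * (binom (2*x - 1) (2*k+1) * Od (k+1)) = binom (2*x - 1) (2*k+1) * fact (2*k+1)"
    unfolding fact_double_odd by (simp add: mult_ac)
  also have "\<dots> = (2^k * fact k) * (binom (x - 1) k * Pd x (k+1))"
    using e by (simp add: mult_ac)
  finally show ?thesis by simp
qed

lemma D3: "int (Suc k) * binom x (Suc k) = x * binom (x - 1) k"
proof -
  have "fact k * (int (Suc k) * binom x (Suc k)) = binom x (Suc k) * fact (Suc k)"
    by (simp add: fact_Suc algebra_simps)
  also have "\<dots> = ff x (Suc k)" by (rule binom_fact)
  also have "\<dots> = x * ff (x - 1) k" by (rule ff_Suc')
  also have "\<dots> = fact k * (x * binom (x - 1) k)"
    by (simp add: binom_fact[symmetric] mult_ac)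
  finally show ?thesis by simp
qed

lemma D4: "(x - int k) * binom x k = x * binom (x - 1) k"
proof -
  have "fact k * ((x - int k) * binom x k) = ff x k * (x - int k)"
    by (simp add: binom_fact[symmetric] mult_ac)
  also have "\<dots> = ff x (Suc k)" by (simp only: ff_Suc)
  also have "\<dots> = x * ff (x - 1) k" by (rule ff_Suc')
  also have "\<dots> = fact k * (x * binom (x - 1) k)"
    by (simp add: binom_fact[symmetric] mult_ac)
  finally show ?thesis by simp
qed

lemma D5: "int (Suc k) * binom y (Suc k) = (y - int k) * binom y k"
proof -
  have "fact k * (int (Suc k) * binom y (Suc k)) = binom y (Suc k) * fact (Suc k)"
    by (simp add: fact_Suc algebra_simps)
  also have "\<dots> = ff y (Suc k)" by (rule binom_fact)
  also have "\<dots> = ff y k * (y - int k)" by (rule ff_Suc)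
  also have "\<dots> = fact k * ((y - int k) * binom y k)"
    by (simp add: binom_fact[symmetric] mult_ac)
  finally show ?thesis by simp
qed

lemma prod_diff_dvd:
  fixes f g :: "nat \<Rightarrow> int"
  assumes "\<And>i. i < k \<Longrightarrow> d dvd f i - g i"
  shows "d dvd (\<Prod>i<k. f i) - (\<Prod>i<k. g i)"
  using assms
proof (induction k)
  case 0 then show ?case by simp
next
  case (Suc k)
  have "(\<Prod>i<Suc k. f i) - (\<Prod>i<Suc k. g i)
      = ((\<Prod>i<k. f i) - (\<Prod>i<k. g i)) * f k + (\<Prod>i<k. g i) * (f k - g k)"
    by (simp add: algebra_simps)
  moreover have "d dvd (\<Prod>i<k. f i) - (\<Prod>i<k. g i)" using Suc by simp
  moreover have "d dvd f k - g k" using Suc by simp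
  ultimately show ?case by simp
qed

lemma J1: "2*(x - y) dvd Pd x k - Pd y k"
  unfolding Pd_def by (rule prod_diff_dvd) (simp add: algebra_simps)

lemma Pd_zero: "Pd 0 k = (-1)^k * Od k"
proof -
  have "Od k = (\<Prod>j<k. 2*int (k - Suc j) + 1)"
    unfolding Od_def Pd_def
    by (rule prod.cong) (auto simp: of_nat_diff)
  also have "\<dots> = (\<Prod>j<k. 2*int j + 1)"
    by (rule prod.nat_diff_reindex)
  finally have "Od k = (\<Prod>j<k. 2*int j + 1)" .
  moreover have "Pd 0 k = (\<Prod>j<k. (-1::int)) * (\<Prod>j<k. 2*int j + 1)"
    unfolding Pd_def prod.distrib[symmetric] by (rule prod.cong) auto
  ultimately show ?thesis by simp
qed

lemma Pd_odd: "odd (Pd x k)"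
  by (induction k) (simp_all add: Pd_Suc)

lemma Od_odd: "odd (Od k)"
  by (simp add: Od_def Pd_odd)

definition Vd :: "nat \<Rightarrow> int \<Rightarrow> int" where
  "Vd h y = (\<Prod>j<h. y - (2*int j + 1)^2)"

lemma Pd_even: "Pd x (2*h) = Vd h ((2*x - 2*int h)^2)"
proof (induction h arbitrary: x)
  case 0 then show ?case by (simp add: Vd_def)
next
  case (Suc h)
  have "Pd x (2*Suc h) = (2*x - 1) * Pd (x - 1) (2*h + 1)"
    by (simp add: Pd_Suc')
  also have "\<dots> = (2*x - 1) * (2*(x-1) - 4 * int h - 1) * Pd (x - 1) (2*h)"
    by (simp add: Pd_Suc)
  also have "\<dots> = (2*x - 1) * (2*(x-1) - 4 * int h - 1) * Vd h ((2*x - 2*int (Suc h))^2)"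
    using Suc by (simp add: algebra_simps)
  also have "\<dots> = Vd (Suc h) ((2*x - 2*int (Suc h))^2)"
    by (simp add: Vd_def power2_eq_square algebra_simps)
  finally show ?case .
qed

lemma JE: assumes "even k" shows "4*x*(x - int k) dvd Pd x k - Od k"
proof -
  obtain h where k: "k = 2*h" using assms by blast
  have "Pd x k - Od k = Vd h ((2*x - 2*int h)^2) - Vd h ((2*int k - 2*int h)^2)"
    by (simp add: Od_def Pd_even k)
  also have "((2*x - 2*int h)^2 - (2*int k - 2*int h)^2) dvd \<dots>"
    unfolding Vd_def by (rule prod_diff_dvd) simp
  finally show ?thesis by (simp add: k power2_eq_square algebra_simps)
qed


lemma dvd_coprime_odd:
  fixes z u :: int
  assumes "2^n dvd u * z" "odd u"
  shows "2^n dvd z"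
proof -
  have "coprime (2^n) u" using assms(2) by simp
  then show ?thesis using assms(1) coprime_dvd_mult_right_iff by blast
qed

lemma dvd_coprime_odd':
  fixes z u :: int
  assumes "2^n dvd z * u" "odd u"
  shows "2^n dvd z"
proof -
  have "coprime (2^n) u" using assms(2) by simp
  then show ?thesis using assms(1) coprime_dvd_mult_left_iff by blast
qed

lemma p_zero_if_odd:
  fixes M :: int
  assumes "2^p dvd M" "odd M" shows "p = 0"
proof (rule ccontr)
  assume "p \<noteq> 0"
  then have "(2::int) dvd 2^p" by simp
  then have "2 dvd M" using assms(1) dvd_trans by blast
  then show False using assms(2) by simp
qed

lemma four_dvd: "even (x::int) \<Longrightarrow> 4 dvd 2*x"
  by (auto elim!: evenE)

lemma core:
  fixes M L :: nat and \<tau> :: int and p :: nat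
  assumes pM: "2^p dvd int M" and M1: "M \<ge> 1" and L1: "L \<ge> 1"
  defines "K \<equiv> int M * \<tau> + int L"
  shows "2^(2*p+2) dvd binom (2*int M) (2*L) * binom (2*K - 1) (2*(M-1)+1)
           - neg1pow (K + int M) * binom (int M) L * binom (K - 1) (M - 1)"
proof -
  obtain M' where M': "M = Suc M'" using M1 by (cases M) auto
  obtain L' where L': "L = Suc L'" using L1 by (cases L) auto
  define Mi where "Mi = int M"
  define Li where "Li = int L"
  define A where "A = binom Mi L"
  define B where "B = binom (K - 1) M'"
  define F1 where "F1 = binom (2*Mi) (2*L)"
  define F2 where "F2 = binom (2*K - 1) (2*M'+1)"
  define P1 where "P1 = Pd Mi L"
  define P2 where "P2 = Pd K M"
  define O1 where "O1 = Od L"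
  define O2 where "O2 = Od M"
  define s1 :: int where "s1 = (if odd L \<and> odd (Mi - Li) then -1 else 1)"
  define s2 :: int where "s2 = (if odd M \<and> odd (K - Mi) then -1 else 1)"
  define X1 where "X1 = P1 - s1 * O1"
  define X2 where "X2 = P2 - s2 * O2"
  define N :: nat where "N = 2*p+2"
  have KK: "K = Mi * \<tau> + Li" by (simp add: K_def Mi_def Li_def)
  have eF1: "F1 * O1 = A * P1" unfolding F1_def O1_def A_def P1_def by (rule D1)
  have eF2: "F2 * O2 = B * P2" unfolding F2_def O2_def B_def P2_def M' using D2[of K M'] by simp
  have eps: "neg1pow (K + Mi) = s1 * s2"
  proof (cases "even M")
    case True
    have eMi: "even Mi" using True by (simp add: Mi_def)
    then have "even (K + Mi) \<longleftrightarrow> even L" by (simp add: KK Li_def)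
    moreover have "odd (Mi - Li) \<longleftrightarrow> odd L" using eMi by (simp add: Li_def)
    ultimately show ?thesis using True by (simp add: neg1pow_def s1_def s2_def)
  next
    case False
    have oMi: "odd Mi" using False by (simp add: Mi_def)
    then have e1: "s1 = 1" unfolding s1_def by (auto simp: Li_def)
    have e2: "s2 = (if odd (K - Mi) then -1 else 1)" using False by (simp add: s2_def)
    have "even (K + Mi) \<longleftrightarrow> even (K - Mi)" by simp
    then show ?thesis unfolding e1 e2 neg1pow_def by simp
  qed
  have key: "(F1 * F2 - neg1pow (K + Mi) * A * B) * (O1 * O2) = A*B*X1*P2 + s1 * (A*B*O1*X2)"
  proof -
    have "(F1 * F2 - neg1pow (K + Mi) * A * B) * (O1 * O2) = (F1*O1)*(F2*O2) - s1*s2*A*B*O1*O2"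
      by (simp add: eps algebra_simps)
    also have "\<dots> = A*B*X1*P2 + s1 * (A*B*O1*X2)"
      unfolding eF1 eF2 X1_def X2_def by (simp add: algebra_simps)
    finally show ?thesis .
  qed
  have pMi: "2^p dvd Mi" using pM by (simp add: Mi_def)
  have hA1: "Li * A = Mi * binom (Mi - 1) L'"
    unfolding Li_def A_def L' using D3[of L' Mi] by simp
  have hA2: "(Mi - Li) * A = Mi * binom (Mi - 1) L"
    unfolding Li_def A_def using D4[of Mi L] by simp
  have hB1: "K * B = Mi * binom K M"
    unfolding B_def Mi_def M' using D3[of M' K] by simp
  have hB2: "(K - Mi) * B = Mi * binom (K - 1) M"
    unfolding B_def Mi_def M' using D5[of M' "K - 1"] by (simp add: algebra_simps)
  have hAK: "A * K = Mi * (\<tau> * A + binom (Mi - 1) L')"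
    using hA1 by (simp add: KK algebra_simps)
  have sq: "2^N dvd 4 * Mi * Mi"
  proof -
    obtain c where "Mi = 2^p * c" using pMi by blast
    have "N = p + p + 2" by (simp add: N_def)
    then have "(2::int)^N = 2^p * 2^p * 4" by (simp add: power_add)
    then have "4 * Mi * Mi = 2^N * (c*c)" using \<open>Mi = 2^p * c\<close> by (simp add: algebra_simps)
    then show ?thesis by simp
  qed
  have h1: "2^N dvd A*B*X1*P2"
  proof (cases "even L")
    case True
    then have s: "s1 = 1" by (simp add: s1_def)
    have "4*Mi*(Mi - int L) dvd Pd Mi L - Od L" using JE[OF True] by simp
    then obtain Y where Y: "X1 = 4*Mi*(Mi - Li)*Y" unfolding X1_def s P1_def O1_def Li_def by auto
    have "A*B*X1*P2 = 4*Mi*((Mi - Li)*A)*(Y*B*P2)"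
      unfolding Y by (simp add: algebra_simps)
    also have "\<dots> = (4*Mi*Mi) * (binom (Mi - 1) L * (Y * B * P2))"
      unfolding hA2 by (simp add: algebra_simps)
    finally have e: "A*B*X1*P2 = (4*Mi*Mi) * (binom (Mi - 1) L * (Y * B * P2))" .
    show ?thesis unfolding e by (rule dvd_mult2[OF sq])
  next
    case oddL: False
    show ?thesis
    proof (cases "even (Mi - Li)")
      case True
      then have s: "s1 = 1" by (simp add: s1_def)
      have "odd Mi" using True oddL by (simp add: Li_def)
      then have p0: "p = 0" using p_zero_if_odd pMi by blast
      have "2*(Mi - Li) dvd X1" unfolding X1_def s P1_def O1_def Od_def Li_def using J1[of Mi "int L" L] by simp
      moreover have "4 dvd 2*(Mi - Li)" using True by (rule four_dvd)
      ultimately have "4 dvd X1" using dvd_trans by blast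
      then show ?thesis using p0 by (simp add: N_def)
    next
      case False
      then have s: "s1 = -1" using oddL by (simp add: s1_def)
      have evM: "even Mi" using False oddL by (simp add: Li_def)
      have "X1 = Pd Mi L - Pd 0 L" unfolding X1_def s P1_def O1_def Pd_zero using oddL by simp
      then have "2*(Mi - 0) dvd X1" using J1[of Mi 0 L] by simp
      then obtain Y where Y: "X1 = 2*Mi*Y" by auto
      have "2^p dvd Li * A" unfolding hA1 using pMi by (rule dvd_mult2)
      moreover have "odd Li" using oddL by (simp add: Li_def)
      ultimately have pA: "2^p dvd A" by (rule dvd_coprime_odd)
      have oK: "odd K" using evM oddL by (simp add: KK Li_def)
      have "2^p dvd K * B" unfolding hB1 using pMi by (rule dvd_mult2)
      then have pB: "2^p dvd B" using oK by (rule dvd_coprime_odd)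
      have c: "2^(p+2) dvd 2^p*(2*Mi)"
      proof (cases "p = 0")
        case True
        then show ?thesis using four_dvd[OF evM] by simp
      next
        case False
        obtain c where c: "Mi = 2^p * c" using pMi by blast
        have pe: "p + 2 + (p - 1) = p + 1 + p" using False by simp
        have "(2::int)^(p+2) * 2^(p - 1) = 2^p * 2 * 2^p"
          by (simp only: power_add[symmetric] pe) (simp add: power_add)
        then have "2^p*(2*Mi) = 2^(p+2) * (2^(p - 1) * c)"
          unfolding c by (simp add: mult_ac)
        then show ?thesis by simp
      qed
      have d: "2^p * 2^(p+2) dvd A * (2^p*(2*Mi))" using pA c by (rule mult_dvd_mono)
      obtain b' where b': "B = 2^p * b'" using pB by blast
      have e: "A*B*X1*P2 = (A * (2^p*(2*Mi))) * (b' * Y * P2)"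
        unfolding Y b' by (simp add: algebra_simps)
      have "2^p * 2^(p+2) dvd A*B*X1*P2" unfolding e using d by (rule dvd_mult2)
      moreover have "(2::int)^N = 2^p * 2^(p+2)" by (simp add: N_def power_add[symmetric])
      ultimately show ?thesis by simp
    qed
  qed
  have h2: "2^N dvd A*B*O1*X2"
  proof (cases "even M")
    case True
    then have s: "s2 = 1" by (simp add: s2_def)
    have "4*K*(K - int M) dvd Pd K M - Od M" using JE[OF True] by simp
    then obtain Y where Y: "X2 = 4*K*(K - Mi)*Y" unfolding X2_def s P2_def O2_def Mi_def by auto
    have "A*B*O1*X2 = 4 * (A*K) * ((K - Mi) * B) * O1 * Y"
      unfolding Y by (simp add: algebra_simps)
    also have "\<dots> = (4*Mi*Mi) * ((\<tau> * A + binom (Mi - 1) L') * binom (K - 1) M * O1 * Y)"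
      unfolding hAK hB2 by (simp add: algebra_simps)
    finally have e: "A*B*O1*X2 = (4*Mi*Mi) * ((\<tau> * A + binom (Mi - 1) L') * binom (K - 1) M * O1 * Y)" .
    show ?thesis unfolding e by (rule dvd_mult2[OF sq])
  next
    case oddM: False
    then have p0: "p = 0" using p_zero_if_odd pMi by (simp add: Mi_def)
    have "4 dvd X2"
    proof (cases "even (K - Mi)")
      case True
      then have s: "s2 = 1" by (simp add: s2_def)
      have "2*(K - Mi) dvd X2" unfolding X2_def s P2_def O2_def Od_def Mi_def using J1[of K "int M" M] by simp
      moreover have "4 dvd 2*(K - Mi)" using True by (rule four_dvd)
      ultimately show ?thesis using dvd_trans by blast
    next
      case False
      then have s: "s2 = -1" using oddM by (simp add: s2_def)
      have evK: "even K" using False oddM by (simp add: Mi_def)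
      have "X2 = Pd K M - Pd 0 M" unfolding X2_def s P2_def O2_def Pd_zero using oddM by simp
      then have "2*(K - 0) dvd X2" using J1[of K 0 M] by simp
      moreover have "4 dvd 2*(K - 0)" using evK four_dvd by simp
      ultimately show ?thesis using dvd_trans by blast
    qed
    then show ?thesis using p0 by (simp add: N_def)
  qed
  have "2^N dvd (F1 * F2 - neg1pow (K + Mi) * A * B) * (O1 * O2)"
    unfolding key by (rule dvd_add[OF h1 dvd_mult[OF h2]])
  moreover have "odd (O1 * O2)" by (simp add: O1_def O2_def Od_odd)
  ultimately have fin: "2^N dvd F1 * F2 - neg1pow (K + Mi) * A * B"
    by (rule dvd_coprime_odd')
  have e1: "M - 1 = M'" "2*(M-1)+1 = 2*M'+1" by (simp_all add: M')
  show ?thesis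
    using fin unfolding N_def F1_def F2_def A_def B_def Mi_def e1 .
qed

theorem lemma3p3:
  fixes \<tau> m l :: int and \<alpha> \<beta> a b :: nat
  assumes "odd a" and "odd b" and "a > 0" and "b > 0" and "\<alpha> \<ge> 1"
    and "m = 2 ^ \<alpha> * int a" and "l = 2 ^ \<beta> * int b"
  shows "(2::int) ^ (2 * \<alpha>) dvd
    (neg1pow (m * \<tau> + m + l) * binom m (nat l) * binom (m * \<tau> + l - 1) (nat (m - 1))
     - (if \<beta> = 0 then 0
        else neg1pow ((m * \<tau> + m + l) div 2) * binom (m div 2) (nat (l div 2))
             * binom ((m * \<tau> + l) div 2 - 1) (nat (m div 2 - 1))))"
  proof -
  note oa = assms(1) and ob = assms(2) and a0 = assms(3) and b0 = assms(4) and al = assms(5)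
    and mdef = assms(6) and ldef = assms(7)
  define Mn :: nat where "Mn = 2^(\<alpha>-1) * a"
  have pa: "(2::int)^\<alpha> = 2 * 2^(\<alpha>-1)" using al by (simp add: power_Suc[symmetric])
  have m2: "m = 2 * int Mn" unfolding mdef Mn_def pa by simp
  have Mn1: "Mn \<ge> 1" using a0 by (simp add: Mn_def)
  have pM: "2^(\<alpha>-1) dvd int Mn" by (simp add: Mn_def)
  have aa: "2*(\<alpha>-1)+2 = 2*\<alpha>" using al by simp
  show ?thesis
  proof (cases "\<beta> = 0")
    case True
    have l: "l = int b" using ldef True by simp
    have ol: "odd l" using ob l by simp
    obtain b' where b': "b = Suc b'" using b0 by (cases b) auto
    have pm: "2^\<alpha> dvd m" using mdef by simp
    have eb: "int b * binom m b = m * binom (m - 1) b'" unfolding b' by (rule D3)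
    have "2^\<alpha> dvd int b * binom m b" unfolding eb by (rule dvd_mult2[OF pm])
    moreover have "odd (int b)" using ob by simp
    ultimately have h1: "2^\<alpha> dvd binom m b" by (rule dvd_coprime_odd)
    obtain m' where m': "nat (m - 1) = m'" by blast
    have "m - 1 \<ge> 0" using m2 Mn1 by simp
    then have "int m' = m - 1" using m' by auto
    then have mm: "m = int (Suc m')" by simp
    define N where "N = m * \<tau> + l"
    have oN: "odd N" unfolding N_def m2 using ol by simp
    have "int (Suc m') * binom N (Suc m') = N * binom (N - 1) m'" by (rule D3)
    then have eN: "N * binom (N - 1) m' = m * binom N (Suc m')" unfolding mm by simp
    have "2^\<alpha> dvd N * binom (N - 1) m'" unfolding eN by (rule dvd_mult2[OF pm])
    then have h2: "2^\<alpha> dvd binom (N - 1) m'" using oN by (rule dvd_coprime_odd)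
    have "2^\<alpha> * 2^\<alpha> dvd binom m b * binom (N - 1) m'" using h1 h2 by (rule mult_dvd_mono)
    then have "(2::int)^(2*\<alpha>) dvd binom m b * binom (N - 1) m'" by (simp add: mult_2 power_add)
    then have "(2::int)^(2*\<alpha>) dvd neg1pow (m * \<tau> + m + l) * (binom m b * binom (N - 1) m')"
      by (rule dvd_mult)
    then show ?thesis using True by (simp add: l m' N_def mult.assoc)
  next
    case False
    define Ln :: nat where "Ln = 2^(\<beta>-1) * b"
    have pb: "(2::int)^\<beta> = 2 * 2^(\<beta>-1)" using False by (simp add: power_Suc[symmetric])
    have l2: "l = 2 * int Ln" unfolding ldef Ln_def pb by simp
    have Ln1: "Ln \<ge> 1" using b0 by (simp add: Ln_def)
    define K where "K = int Mn * \<tau> + int Ln"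
    have C: "2^(2*(\<alpha>-1)+2) dvd binom (2*int Mn) (2*Ln) * binom (2*K - 1) (2*(Mn-1)+1)
           - neg1pow (K + int Mn) * binom (int Mn) Ln * binom (K - 1) (Mn - 1)"
      unfolding K_def by (rule core[OF pM Mn1 Ln1])
    have e1: "nat l = 2*Ln" unfolding l2 by (simp add: nat_mult_distrib)
    have e2: "nat (m - 1) = 2*(Mn-1)+1" unfolding m2 using Mn1 by (simp add: nat_mult_distrib nat_diff_distrib)
    have e3: "m * \<tau> + l - 1 = 2*K - 1" unfolding K_def m2 l2 by (simp add: algebra_simps)
    have e4: "neg1pow (m * \<tau> + m + l) = 1" unfolding neg1pow_def m2 l2 by simp
    have e5: "(m * \<tau> + m + l) div 2 = K + int Mn"
    proof -
      have "m * \<tau> + m + l = 2 * (K + int Mn)" unfolding K_def m2 l2 by (simp add: algebra_simps)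
      then show ?thesis by simp
    qed
    have e6: "m div 2 = int Mn" unfolding m2 by simp
    have e7: "nat (l div 2) = Ln" unfolding l2 by simp
    have e8: "(m * \<tau> + l) div 2 - 1 = K - 1"
    proof -
      have "m * \<tau> + l = 2 * K" unfolding K_def m2 l2 by (simp add: algebra_simps)
      then show ?thesis by simp
    qed
    have e9: "nat (int Mn - 1) = Mn - 1" using Mn1 by (simp add: nat_diff_distrib)
    have C2: "2^(2*\<alpha>) dvd binom (2*int Mn) (2*Ln) * binom (2*K - 1) (2*(Mn-1)+1)
           - neg1pow (K + int Mn) * binom (int Mn) Ln * binom (K - 1) (Mn - 1)"
      using C unfolding aa .
    have ifF: "(if \<beta> = 0 then 0 else neg1pow (K + int Mn) * binom (int Mn) Ln * binom (K - 1) (Mn - 1))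
       = neg1pow (K + int Mn) * binom (int Mn) Ln * binom (K - 1) (Mn - 1)" using False by simp
    show ?thesis
      unfolding e1 e2 e3 e4 e5 e9 e6 e7 e8 ifF mult_1 unfolding m2 by (rule C2)
  qed
qed

end
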